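(* Let $\phi:\mathsf S\to\mathsf T$ be a morphism in $\mathbf{TEmb}$, i.e. a morphism of polynomial endofunctors between two trees. Then each of the three component maps $\phi_0:S_0\to T_0$, $\phi_1:S_1\to T_1$, $\phi_2:S_2\to T_2$ is injective.
   Context: A polynomial endofunctor $\mathsf P=(P_0,P_1,P_2)$ is a diagram of sets $P_0\xleftarrow{s}P_2\xrightarrow{p}P_1\xrightarrow{t}P_0$ in which $p$ has finite fibres. A morphism $\alpha:\mathsf Q\to\mathsf P$ of polynomial endofunctors is a triple of maps $\alpha_0:Q_0\to P_0$, $\alpha_1:Q_1\to P_1$, $\alpha_2:Q_2\to P_2$ commuting with $s,p,t$ and such that the middle square ($Q_2\to Q_1$ over $P_2\to P_1$) is a pullback; these form the category $\mathbf{PolyEnd}$. A tree is a polynomial endofunctor $\mathsf T$ such that (1) $T_0,T_1,T_2$ are finite; (2) $t$ is injective; (3) $s$ is injective and $T_0\setminus s(T_2)$ is a single element, called the root (so $T_0=T_2+\{\mathrm{root}\}$); (4) with $\sigma:T_0\to T_0$ defined by $\sigma(\mathrm{root})=\mathrm{root}$ and $\sigma(e)=t(p(e))$ for $e\in T_2$, for every $x\in T_0$ there is $k\in\mathbb N$ with $\sigma^k(x)=\mathrm{root}$. Elements of $T_0$ are edges, of $T_1$ nodes; input edges of a node $b$ are the elements of $p^{-1}(b)$, $t(b)$ is its output edge. $\mathbf{TEmb}$ is the full subcategory of $\mathbf{PolyEnd}$ whose objects are trees. *)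

theory Defs
  imports Main
begin

text \<open>A polynomial endofunctor P0 <-s- P2 -p-> P1 -t-> P0, with carriers given as sets
  (edges P0 :: 'e set, nodes P1 :: 'n set, P2 :: 'f set) and maps s, p, t.\<close>

record ('e, 'n, 'f) polyend =
  P0 :: "'e set"
  P1 :: "'n set"
  P2 :: "'f set"
  src :: "'f \<Rightarrow> 'e"
  prj :: "'f \<Rightarrow> 'n"
  tgt :: "'n \<Rightarrow> 'e"

definition is_polyend :: "('e, 'n, 'f) polyend \<Rightarrow> bool" where
  "is_polyend P \<longleftrightarrow>
     (\<forall>x\<in>P2 P. src P x \<in> P0 P) \<and>
     (\<forall>x\<in>P2 P. prj P x \<in> P1 P) \<and>
     (\<forall>b\<in>P1 P. tgt P b \<in> P0 P) \<and>
     (\<forall>b\<in>P1 P. finite {x\<in>P2 P. prj P x = b})"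

text \<open>Morphism Q -> P: maps commuting with s, p, t, and the middle square is a pullback,
  i.e. the canonical map Q2 -> Q1 x_{P1} P2 is a bijection.\<close>

definition is_poly_mor ::
  "('e, 'n, 'f) polyend \<Rightarrow> ('e2, 'n2, 'f2) polyend \<Rightarrow>
   ('e \<Rightarrow> 'e2) \<Rightarrow> ('n \<Rightarrow> 'n2) \<Rightarrow> ('f \<Rightarrow> 'f2) \<Rightarrow> bool" where
  "is_poly_mor Q P a0 a1 a2 \<longleftrightarrow>
     (\<forall>x\<in>P0 Q. a0 x \<in> P0 P) \<and>
     (\<forall>x\<in>P1 Q. a1 x \<in> P1 P) \<and>
     (\<forall>x\<in>P2 Q. a2 x \<in> P2 P) \<and>
     (\<forall>x\<in>P2 Q. src P (a2 x) = a0 (src Q x)) \<and>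
     (\<forall>x\<in>P2 Q. prj P (a2 x) = a1 (prj Q x)) \<and>
     (\<forall>b\<in>P1 Q. tgt P (a1 b) = a0 (tgt Q b)) \<and>
     bij_betw (\<lambda>x. (prj Q x, a2 x)) (P2 Q)
        {(b, y). b \<in> P1 Q \<and> y \<in> P2 P \<and> a1 b = prj P y}"

definition tree_root :: "('e, 'n, 'f) polyend \<Rightarrow> 'e" where
  "tree_root T = the_elem (P0 T - src T ` P2 T)"

definition tree_sigma :: "('e, 'n, 'f) polyend \<Rightarrow> 'e \<Rightarrow> 'e" where
  "tree_sigma T x =
     (if x = tree_root T then tree_root T
      else tgt T (prj T (THE y. y \<in> P2 T \<and> src T y = x)))"

definition is_tree :: "('e, 'n, 'f) polyend \<Rightarrow> bool" where
  "is_tree T \<longleftrightarrow>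
     is_polyend T \<and>
     finite (P0 T) \<and> finite (P1 T) \<and> finite (P2 T) \<and>
     inj_on (tgt T) (P1 T) \<and>
     inj_on (src T) (P2 T) \<and>
     (\<exists>r. P0 T - src T ` P2 T = {r}) \<and>
     (\<forall>x\<in>P0 T. \<exists>k::nat. (tree_sigma T ^^ k) x = tree_root T)"

end

theory Submission
  imports Defs
begin

lemma tree_parts:
  assumes "is_tree T"
  shows "is_polyend T" "inj_on (tgt T) (P1 T)" "inj_on (src T) (P2 T)"
    "\<exists>r. P0 T - src T ` P2 T = {r}"
    "\<And>x. x\<in>P0 T \<Longrightarrow> \<exists>k::nat. (tree_sigma T ^^ k) x = tree_root T"
  using assms unfolding is_tree_def by auto
lemma polyend_parts:
  assumes "is_polyend T"
  shows "\<And>x. x\<in>P2 T \<Longrightarrow> src T x \<in> P0 T" "\<And>x. x\<in>P2 T \<Longrightarrow> prj T x \<in> P1 T"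
    "\<And>b. b\<in>P1 T \<Longrightarrow> tgt T b \<in> P0 T"
  using assms unfolding is_polyend_def by auto
lemma tree_root_props:
  assumes "is_tree T"
  shows "tree_root T \<in> P0 T" "tree_root T \<notin> src T ` P2 T"
    "P0 T - src T ` P2 T = {tree_root T}"
proof -
  obtain r where r: "P0 T - src T ` P2 T = {r}" using tree_parts(4)[OF assms] by (elim exE)
  hence "tree_root T = r" unfolding tree_root_def by simp
  thus "tree_root T \<in> P0 T" "tree_root T \<notin> src T ` P2 T" "P0 T - src T ` P2 T = {tree_root T}"
    using r by auto
qed
lemma tree_sigma_root: "tree_sigma T (tree_root T) = tree_root T"
  unfolding tree_sigma_def by simp

lemma tree_sigma_root_pow: "(tree_sigma T ^^ n) (tree_root T) = tree_root T"
  by (induction n) (auto simp: tree_sigma_root)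

lemma tree_sigma_src:
  assumes "is_tree T" "f \<in> P2 T"
  shows "tree_sigma T (src T f) = tgt T (prj T f)"
proof -
  have ne: "src T f \<noteq> tree_root T" using tree_root_props(2)[OF assms(1)] assms(2) by (metis imageI)
  have inj: "inj_on (src T) (P2 T)" using tree_parts(3)[OF assms(1)] .
  have "(THE y. y \<in> P2 T \<and> src T y = src T f) = f"
    using inj assms(2) by (auto intro!: the_equality dest: inj_onD)
  thus ?thesis using ne unfolding tree_sigma_def by simp
qed

lemma tree_nonroot:
  assumes "is_tree T" "x \<in> P0 T" "x \<noteq> tree_root T"
  shows "\<exists>f\<in>P2 T. x = src T f"
  using tree_root_props(3)[OF assms(1)] assms(2,3) by blast

lemma tree_sigma_in:
  assumes "is_tree T" "x \<in> P0 T"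
  shows "tree_sigma T x \<in> P0 T"
proof (cases "x = tree_root T")
  case True
  have "tree_sigma T x = tree_root T" using True tree_sigma_root[of T] by simp
  thus ?thesis using tree_root_props(1)[OF assms(1)] by simp
next
  case False
  then obtain f where f: "f \<in> P2 T" "x = src T f" using tree_nonroot[OF assms False] by blast
  have "prj T f \<in> P1 T" using polyend_parts(2)[OF tree_parts(1)[OF assms(1)]] f by blast
  hence "tgt T (prj T f) \<in> P0 T" using polyend_parts(3)[OF tree_parts(1)[OF assms(1)]] by blast
  thus ?thesis using tree_sigma_src[OF assms(1) f(1)] f by simp
qed

lemma pow_root_mono:
  assumes "(tree_sigma T ^^ k) x = tree_root T"
  shows "(tree_sigma T ^^ (d + k)) x = tree_root T"
  using assms by (simp add: funpow_add tree_sigma_root_pow)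

lemma mor_parts:
  assumes "is_poly_mor Q P a0 a1 a2"
  shows "\<And>x. x\<in>P0 Q \<Longrightarrow> a0 x \<in> P0 P" "\<And>x. x\<in>P1 Q \<Longrightarrow> a1 x \<in> P1 P"
    "\<And>x. x\<in>P2 Q \<Longrightarrow> a2 x \<in> P2 P"
    "\<And>x. x\<in>P2 Q \<Longrightarrow> src P (a2 x) = a0 (src Q x)"
    "\<And>x. x\<in>P2 Q \<Longrightarrow> prj P (a2 x) = a1 (prj Q x)"
    "\<And>b. b\<in>P1 Q \<Longrightarrow> tgt P (a1 b) = a0 (tgt Q b)"
    "inj_on (\<lambda>x. (prj Q x, a2 x)) (P2 Q)"
proof -
  have h: "(\<forall>x\<in>P0 Q. a0 x \<in> P0 P) \<and>
     (\<forall>x\<in>P1 Q. a1 x \<in> P1 P) \<and>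
     (\<forall>x\<in>P2 Q. a2 x \<in> P2 P) \<and>
     (\<forall>x\<in>P2 Q. src P (a2 x) = a0 (src Q x)) \<and>
     (\<forall>x\<in>P2 Q. prj P (a2 x) = a1 (prj Q x)) \<and>
     (\<forall>b\<in>P1 Q. tgt P (a1 b) = a0 (tgt Q b)) \<and>
     bij_betw (\<lambda>x. (prj Q x, a2 x)) (P2 Q)
        {(b, y). b \<in> P1 Q \<and> y \<in> P2 P \<and> a1 b = prj P y}"
    using assms unfolding is_poly_mor_def .
  show "\<And>x. x\<in>P0 Q \<Longrightarrow> a0 x \<in> P0 P" "\<And>x. x\<in>P1 Q \<Longrightarrow> a1 x \<in> P1 P"
    "\<And>x. x\<in>P2 Q \<Longrightarrow> a2 x \<in> P2 P"
    "\<And>x. x\<in>P2 Q \<Longrightarrow> src P (a2 x) = a0 (src Q x)"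
    "\<And>x. x\<in>P2 Q \<Longrightarrow> prj P (a2 x) = a1 (prj Q x)"
    "\<And>b. b\<in>P1 Q \<Longrightarrow> tgt P (a1 b) = a0 (tgt Q b)"
    using h by blast+
  show "inj_on (\<lambda>x. (prj Q x, a2 x)) (P2 Q)"
    using h[THEN conjunct2, THEN conjunct2, THEN conjunct2, THEN conjunct2, THEN conjunct2,
      THEN conjunct2] by (rule bij_betw_imp_inj_on)
qed

theorem mainTheorem1:
  fixes S :: "('e, 'n, 'f) polyend" and T :: "('e2, 'n2, 'f2) polyend"
    and phi0 :: "'e \<Rightarrow> 'e2" and phi1 :: "'n \<Rightarrow> 'n2" and phi2 :: "'f \<Rightarrow> 'f2"
  assumes "is_tree S" and "is_tree T" and "is_poly_mor S T phi0 phi1 phi2"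
  shows "inj_on phi0 (P0 S) \<and> inj_on phi1 (P1 S) \<and> inj_on phi2 (P2 S)"
proof -
  note S = assms(1) and T = assms(2)
  note M = mor_parts[OF assms(3)]
  have m0: "\<And>x. x \<in> P0 S \<Longrightarrow> phi0 x \<in> P0 T" using M by simp
  have m1: "\<And>x. x \<in> P1 S \<Longrightarrow> phi1 x \<in> P1 T" using M by simp
  have m2: "\<And>x. x \<in> P2 S \<Longrightarrow> phi2 x \<in> P2 T" using M by simp
  have cs: "\<And>x. x \<in> P2 S \<Longrightarrow> src T (phi2 x) = phi0 (src S x)" using M by simp
  have cp: "\<And>x. x \<in> P2 S \<Longrightarrow> prj T (phi2 x) = phi1 (prj S x)" using M by simp
  have ct: "\<And>x. x \<in> P1 S \<Longrightarrow> tgt T (phi1 x) = phi0 (tgt S x)" using M by simp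
  have pb: "inj_on (\<lambda>x. (prj S x, phi2 x)) (P2 S)" using M(7) .
  have Sp: "\<And>x. x \<in> P2 S \<Longrightarrow> prj S x \<in> P1 S" "\<And>x. x \<in> P2 S \<Longrightarrow> src S x \<in> P0 S"
    "\<And>b. b \<in> P1 S \<Longrightarrow> tgt S b \<in> P0 S"
    using polyend_parts[OF tree_parts(1)[OF S]] by blast+
  have injsT: "inj_on (src T) (P2 T)" and injsS: "inj_on (src S) (P2 S)"
    and injtS: "inj_on (tgt S) (P1 S)"
    using tree_parts[OF S] tree_parts[OF T] by blast+
  let ?rS = "tree_root S" and ?rT = "tree_root T"
  let ?sS = "tree_sigma S" and ?sT = "tree_sigma T"
  have comm: "?sT (phi0 x) = phi0 (?sS x)" if xx: "x \<in> P0 S" "x \<noteq> ?rS" for x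
  proof -
    obtain f where f: "f \<in> P2 S" "x = src S f" using tree_nonroot[OF S xx] by blast
    have "?sT (phi0 x) = ?sT (src T (phi2 f))" using cs f by simp
    also have "\<dots> = tgt T (prj T (phi2 f))" using tree_sigma_src[OF T m2[OF f(1)]] .
    also have "\<dots> = phi0 (tgt S (prj S f))" using cp ct f Sp by simp
    also have "\<dots> = phi0 (?sS x)" using tree_sigma_src[OF S f(1)] f by simp
    finally show ?thesis .
  qed
  have nonroot_img: "phi0 x \<noteq> ?rT" if xx: "x \<in> P0 S" "x \<noteq> ?rS" for x
  proof -
    obtain f where f: "f \<in> P2 S" "x = src S f" using tree_nonroot[OF S xx] by blast
    have "phi0 x \<in> src T ` P2 T" using cs f m2 by (metis imageI)
    thus ?thesis using tree_root_props(2)[OF T] by auto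
  qed
  have reach: "\<forall>y. y \<in> P0 S \<longrightarrow> (?sS ^^ k) y = ?rS \<longrightarrow>
      (\<exists>j. (?sT ^^ j) (phi0 y) = phi0 ?rS \<and> (y \<noteq> ?rS \<longrightarrow> j \<ge> 1))" for k
  proof (induction k)
    case 0 thus ?case by (auto intro: exI[of _ 0])
  next
    case (Suc k)
    show ?case
    proof (intro allI impI)
      fix y assume y: "y \<in> P0 S" "(?sS ^^ Suc k) y = ?rS"
      show "\<exists>j. (?sT ^^ j) (phi0 y) = phi0 ?rS \<and> (y \<noteq> ?rS \<longrightarrow> j \<ge> 1)"
      proof (cases "y = ?rS")
        case True thus ?thesis by (auto intro: exI[of _ 0])
      next
        case False
        have "(?sS ^^ k) (?sS y) = ?rS" using y(2) by (simp add: funpow_swap1)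
        then obtain j where j: "(?sT ^^ j) (phi0 (?sS y)) = phi0 ?rS"
          using Suc.IH tree_sigma_in[OF S y(1)] by blast
        hence "(?sT ^^ Suc j) (phi0 y) = phi0 ?rS"
          using comm[OF y(1) False] by (simp add: funpow_swap1)
        thus ?thesis by (intro exI[of _ "Suc j"]) simp
      qed
    qed
  qed
  have noroot_coll: False if y: "y \<in> P0 S" "y \<noteq> ?rS" "phi0 y = phi0 ?rS" for y
  proof -
    obtain k where k: "(?sS ^^ k) y = ?rS" using tree_parts(5)[OF S y(1)] by blast
    obtain j where j: "(?sT ^^ j) (phi0 ?rS) = phi0 ?rS" "j \<ge> 1"
      using reach[of k] y k by auto
    let ?p = "phi0 ?rS"
    have p0: "?p \<in> P0 T" using m0 tree_root_props(1)[OF S] by blast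
    have per: "(?sT ^^ (j * i)) ?p = ?p" for i
    proof (induction i)
      case 0 thus ?case by simp
    next
      case (Suc i)
      have "(?sT ^^ (j * Suc i)) ?p = (?sT ^^ j) ((?sT ^^ (j * i)) ?p)"
        by (simp add: funpow_add add.commute)
      thus ?case using Suc j(1) by simp
    qed
    obtain k' where k': "(?sT ^^ k') ?p = ?rT" using tree_parts(5)[OF T p0] by blast
    have "j * k' = (j * k' - k') + k'" using j(2) by (simp add: le_add_diff_inverse2)
    hence "(?sT ^^ (j * k')) ?p = ?rT" using pow_root_mono[OF k'] by metis
    hence "?p = ?rT" using per by simp
    thus False using nonroot_img[OF y(1,2)] y(3) by simp
  qed
  have main: "\<forall>x y. x \<in> P0 S \<longrightarrow> y \<in> P0 S \<longrightarrow> (?sS ^^ n) x = ?rS \<longrightarrow> (?sS ^^ n) y = ?rS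
      \<longrightarrow> phi0 x = phi0 y \<longrightarrow> x = y" for n
  proof (induction n)
    case 0 thus ?case by simp
  next
    case (Suc n)
    show ?case
    proof (intro allI impI)
      fix x y assume x: "x \<in> P0 S" and y: "y \<in> P0 S" and xn: "(?sS ^^ Suc n) x = ?rS"
        and yn: "(?sS ^^ Suc n) y = ?rS" and e: "phi0 x = phi0 y"
      show "x = y"
      proof (cases "x = ?rS"; cases "y = ?rS")
        assume "x = ?rS" "y = ?rS" thus ?thesis by simp
      next
        assume "x = ?rS" "y \<noteq> ?rS" thus ?thesis using noroot_coll[OF y] e by simp
      next
        assume "x \<noteq> ?rS" "y = ?rS" thus ?thesis using noroot_coll[OF x] e by simp
      next
        assume xr: "x \<noteq> ?rS" and yr: "y \<noteq> ?rS"
        obtain f where f: "f \<in> P2 S" "x = src S f" using tree_nonroot[OF S x xr] by blast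
        obtain g where g: "g \<in> P2 S" "y = src S g" using tree_nonroot[OF S y yr] by blast
        have "src T (phi2 f) = src T (phi2 g)" using cs f g e by simp
        hence fg2: "phi2 f = phi2 g" using injsT m2 f g by (meson inj_onD)
        have a: "(?sS ^^ n) (?sS x) = ?rS" "(?sS ^^ n) (?sS y) = ?rS"
          using xn yn by (simp_all add: funpow_swap1)
        have "phi0 (?sS x) = ?sT (phi0 x)" using comm[OF x xr] by simp
        also have "\<dots> = phi0 (?sS y)" using comm[OF y yr] e by simp
        finally have "?sS x = ?sS y"
          using Suc.IH tree_sigma_in[OF S x] tree_sigma_in[OF S y] a by blast
        hence "tgt S (prj S f) = tgt S (prj S g)"
          using tree_sigma_src[OF S f(1)] tree_sigma_src[OF S g(1)] f g by simp
        hence "prj S f = prj S g" using injtS Sp f g by (meson inj_onD)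
        hence "f = g" using pb fg2 f g by (auto dest: inj_onD)
        thus ?thesis using f g by simp
      qed
    qed
  qed
  have inj0: "inj_on phi0 (P0 S)"
  proof (rule inj_onI)
    fix x y assume x: "x \<in> P0 S" and y: "y \<in> P0 S" and e: "phi0 x = phi0 y"
    obtain kx where kx: "(?sS ^^ kx) x = ?rS" using tree_parts(5)[OF S x] by blast
    obtain ky where ky: "(?sS ^^ ky) y = ?rS" using tree_parts(5)[OF S y] by blast
    have a: "(?sS ^^ (ky + kx)) x = ?rS" using pow_root_mono[OF kx] .
    have b: "(?sS ^^ (ky + kx)) y = ?rS" using pow_root_mono[OF ky, of kx] by (simp only: add.commute)
    show "x = y" using main[of "ky + kx", rule_format, OF x y a b e] .
  qed
  have inj2: "inj_on phi2 (P2 S)"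
  proof (rule inj_onI)
    fix f g assume f: "f \<in> P2 S" and g: "g \<in> P2 S" and e: "phi2 f = phi2 g"
    have "phi0 (src S f) = phi0 (src S g)" using cs[OF f] cs[OF g] e by simp
    hence "src S f = src S g" using inj0 Sp f g by (meson inj_onD)
    thus "f = g" using injsS f g by (meson inj_onD)
  qed
  have inj1: "inj_on phi1 (P1 S)"
  proof (rule inj_onI)
    fix b c assume b: "b \<in> P1 S" and c: "c \<in> P1 S" and e: "phi1 b = phi1 c"
    have "phi0 (tgt S b) = phi0 (tgt S c)" using ct[OF b] ct[OF c] e by simp
    hence "tgt S b = tgt S c" using inj0 Sp b c by (meson inj_onD)
    thus "b = c" using injtS b c by (meson inj_onD)
  qed
  show ?thesis using inj0 inj1 inj2 by (intro conjI)
qed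

end
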